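(* Let $\rho:\mathfrak{gl}_{n|n}\to\mathfrak{gl}(V)$ be an irreducible representation of the complex Lie superalgebra $\mathfrak{gl}_{n|n}$ on a finite-dimensional $\mathbb{Z}_2$-graded complex vector space $V=V_0\oplus V_1$ with $\dim V_0\ne\dim V_1$ (extend $\rho$ to the universal enveloping algebra). Then $\rho(I_\ell)=0$ for every $\ell\in\mathbb{N}$.
   Context: A standard basis of $\mathrm{End}(\mathbb{C}^{n|n})$ consists of $E^{\sigma\tau}_{ij}$ with $\sigma,\tau\in\{0,1\}$ and $i,j\in\{1,\dots,n\}$, of parity $\sigma+\tau\bmod 2$, satisfying $E^{\sigma\tau}_{ij}E^{\sigma'\tau'}_{i'j'}=\delta^{\tau\sigma'}\delta_{ji'}E^{\sigma\tau'}_{ij'}$ (here $\sigma=1$ labels the odd block $\mathbb{C}^n$ and $\sigma=0$ the even one). The Lie superalgebra bracket is the supercommutator. The degree-$\ell$ Casimir element of the universal enveloping algebra is $I_\ell=\sum E^{\sigma_1\sigma_2}_{j_1j_2}(-1)^{\sigma_2}E^{\sigma_2\sigma_3}_{j_2j_3}(-1)^{\sigma_3}\cdots E^{\sigma_{\ell-1}\sigma_\ell}_{j_{\ell-1}j_\ell}(-1)^{\sigma_\ell}E^{\sigma_\ell\sigma_1}_{j_\ell j_1}$, summed over all $\sigma_1,\dots,\sigma_\ell\in\{0,1\}$ and $j_1,\dots,j_\ell\in\{1,\dots,n\}$. A representation maps even elements to even operators and odd elements to odd operators and preserves brackets. *)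

theory Defs
  imports Complex_Main "HOL-Library.FuncSet"
begin

text \<open>Operators on the super vector space V = C^(p|q), realised as C^N with N = p+q:
  coordinates a < p span the even part V_0, coordinates p <= a < N span the odd part V_1.
  Operators are N x N matrices given as functions (only entries below N matter).\<close>

type_synonym cmat = "nat \<Rightarrow> nat \<Rightarrow> complex"
type_synonym cvec = "nat \<Rightarrow> complex"

definition mmul :: "nat \<Rightarrow> cmat \<Rightarrow> cmat \<Rightarrow> cmat" where
  "mmul N A B = (\<lambda>a c. \<Sum>b<N. A a b * B b c)"

definition mone :: cmat where
  "mone = (\<lambda>a c. if a = c then 1 else 0)"

definition mlist_prod :: "nat \<Rightarrow> cmat list \<Rightarrow> cmat" where
  "mlist_prod N As = foldr (mmul N) As mone"

definition mvec :: "nat \<Rightarrow> cmat \<Rightarrow> cvec \<Rightarrow> cvec" where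
  "mvec N A v = (\<lambda>a. if a < N then (\<Sum>b<N. A a b * v b) else 0)"

definition vpar :: "nat \<Rightarrow> nat \<Rightarrow> nat" where
  "vpar p a = (if a < p then 0 else 1)"

definition homog :: "nat \<Rightarrow> nat \<Rightarrow> nat \<Rightarrow> cmat \<Rightarrow> bool" where
  "homog p q d A \<longleftrightarrow> (\<forall>a<p+q. \<forall>b<p+q. A a b \<noteq> 0 \<longrightarrow> (vpar p a + vpar p b) mod 2 = d)"

definition epar :: "nat \<Rightarrow> nat \<Rightarrow> nat" where
  "epar \<sigma> \<tau> = (\<sigma> + \<tau>) mod 2"

definition supercomm :: "nat \<Rightarrow> nat \<Rightarrow> nat \<Rightarrow> cmat \<Rightarrow> cmat \<Rightarrow> cmat" where
  "supercomm N a b A B = (\<lambda>x y. mmul N A B x y - (-1) ^ (a * b) * mmul N B A x y)"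

text \<open>A representation of gl(n|n) on C^(p|q), given (by linearity) by the images
  rho sigma tau i j of the basis elements E^{sigma tau}_{ij} (sigma, tau < 2, i, j < n):
  parity is respected and the supercommutator relations
  [E^{st}_{ij}, E^{s't'}_{i'j'}] = d_{ts'} d_{ji'} E^{st'}_{ij'}
      - (-1)^{|E||E'|} d_{t's} d_{j'i} E^{s't}_{i'j} are preserved.\<close>
definition is_rep :: "nat \<Rightarrow> nat \<Rightarrow> nat \<Rightarrow> (nat \<Rightarrow> nat \<Rightarrow> nat \<Rightarrow> nat \<Rightarrow> cmat) \<Rightarrow> bool" where
  "is_rep n p q \<rho> \<longleftrightarrow>
     (\<forall>\<sigma><2. \<forall>\<tau><2. \<forall>i<n. \<forall>j<n. homog p q (epar \<sigma> \<tau>) (\<rho> \<sigma> \<tau> i j)) \<and>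
     (\<forall>\<sigma><2. \<forall>\<tau><2. \<forall>\<sigma>'<2. \<forall>\<tau>'<2. \<forall>i<n. \<forall>j<n. \<forall>i'<n. \<forall>j'<n. \<forall>x<p+q. \<forall>y<p+q.
        supercomm (p+q) (epar \<sigma> \<tau>) (epar \<sigma>' \<tau>') (\<rho> \<sigma> \<tau> i j) (\<rho> \<sigma>' \<tau>' i' j') x y =
          (if \<tau> = \<sigma>' \<and> j = i' then \<rho> \<sigma> \<tau>' i j' x y else 0)
          - (-1) ^ (epar \<sigma> \<tau> * epar \<sigma>' \<tau>') *
            (if \<tau>' = \<sigma> \<and> j' = i then \<rho> \<sigma>' \<tau> i' j x y else 0))"

definition vecs :: "nat \<Rightarrow> cvec set" where
  "vecs N = {v. \<forall>a\<ge>N. v a = 0}"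

definition is_subspace :: "nat \<Rightarrow> cvec set \<Rightarrow> bool" where
  "is_subspace N W \<longleftrightarrow> W \<subseteq> vecs N \<and> (\<lambda>_. 0) \<in> W \<and>
     (\<forall>v\<in>W. \<forall>w\<in>W. (\<lambda>a. v a + w a) \<in> W) \<and> (\<forall>c. \<forall>v\<in>W. (\<lambda>a. c * v a) \<in> W)"

text \<open>Z2-graded subspace: W = (W \<inter> V_0) \<oplus> (W \<inter> V_1)\<close>
definition graded :: "nat \<Rightarrow> cvec set \<Rightarrow> bool" where
  "graded p W \<longleftrightarrow> (\<forall>w\<in>W. (\<lambda>a. if a < p then w a else 0) \<in> W)"

definition invariant :: "nat \<Rightarrow> nat \<Rightarrow> nat \<Rightarrow> (nat \<Rightarrow> nat \<Rightarrow> nat \<Rightarrow> nat \<Rightarrow> cmat) \<Rightarrow> cvec set \<Rightarrow> bool" where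
  "invariant n p q \<rho> W \<longleftrightarrow>
     (\<forall>\<sigma><2. \<forall>\<tau><2. \<forall>i<n. \<forall>j<n. \<forall>w\<in>W. mvec (p+q) (\<rho> \<sigma> \<tau> i j) w \<in> W)"

definition irreducible_rep :: "nat \<Rightarrow> nat \<Rightarrow> nat \<Rightarrow> (nat \<Rightarrow> nat \<Rightarrow> nat \<Rightarrow> nat \<Rightarrow> cmat) \<Rightarrow> bool" where
  "irreducible_rep n p q \<rho> \<longleftrightarrow> 0 < p + q \<and>
     (\<forall>W. is_subspace (p+q) W \<and> graded p W \<and> invariant n p q \<rho> W \<longrightarrow>
          W = {\<lambda>_. 0} \<or> W = vecs (p+q))"

text \<open>image rho(I_l) of the degree-l Casimir element; indices k = 0..l-1 stand for 1..l,
  the factors are E^{s_k s_(k+1)}_{j_k j_(k+1)} (cyclically), with signs (-1)^{s_2+...+s_l}.\<close>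
definition casimir_image :: "nat \<Rightarrow> nat \<Rightarrow> nat \<Rightarrow> (nat \<Rightarrow> nat \<Rightarrow> nat \<Rightarrow> nat \<Rightarrow> cmat) \<Rightarrow> nat \<Rightarrow> cmat" where
  "casimir_image n p q \<rho> l = (\<lambda>x y.
     (\<Sum>s\<in>{0..<l} \<rightarrow>\<^sub>E {0..<2}. \<Sum>j\<in>{0..<l} \<rightarrow>\<^sub>E {0..<n}.
        (-1) ^ (\<Sum>k\<in>{1..<l}. s k) *
           mlist_prod (p+q) (map (\<lambda>k. \<rho> (s k) (s ((k+1) mod l)) (j k) (j ((k+1) mod l))) [0..<l]) x y))"

end

theory Submission
  imports Defs "Jordan_Normal_Form.Spectral_Radius"
begin


lemma mmul_assoc: "mmul N (mmul N A B) C = mmul N A (mmul N B C)"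
proof (intro ext)
  fix x y
  have "mmul N (mmul N A B) C x y = (\<Sum>c<N. \<Sum>b<N. A x b * B b c * C c y)"
    unfolding mmul_def by (simp add: sum_distrib_right)
  also have "\<dots> = (\<Sum>b<N. \<Sum>c<N. A x b * B b c * C c y)" by (rule sum.swap)
  also have "\<dots> = mmul N A (mmul N B C) x y"
    unfolding mmul_def by (simp add: sum_distrib_left mult.assoc)
  finally show "mmul N (mmul N A B) C x y = mmul N A (mmul N B C) x y" .
qed

lemma mmul_sum_left: "mmul N (\<lambda>u v. \<Sum>c\<in>S. F c u v) B u v = (\<Sum>c\<in>S. mmul N (F c) B u v)"
  unfolding mmul_def sum_distrib_right by (rule sum.swap)

lemma mmul_sum_right: "mmul N A (\<lambda>u v. \<Sum>c\<in>S. F c u v) u v = (\<Sum>c\<in>S. mmul N A (F c) u v)"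
  unfolding mmul_def sum_distrib_left by (rule sum.swap)

lemma mmul_scal_left[simp]: "mmul N (\<lambda>u v. k * A u v) B u v = k * mmul N A B u v"
  unfolding mmul_def by (simp add: sum_distrib_left mult.assoc)

lemma mmul_scal_right[simp]: "mmul N A (\<lambda>u v. k * B u v) u v = k * mmul N A B u v"
  unfolding mmul_def by (simp add: sum_distrib_left mult.left_commute)

lemma mmul_add_left[simp]: "mmul N (\<lambda>u v. A u v + A' u v) B u v = mmul N A B u v + mmul N A' B u v"
  unfolding mmul_def by (simp add: distrib_right sum.distrib)

lemma mmul_add_right[simp]: "mmul N A (\<lambda>u v. B u v + B' u v) u v = mmul N A B u v + mmul N A B' u v"
  unfolding mmul_def by (simp add: distrib_left sum.distrib)

lemma mmul_diff_left[simp]: "mmul N (\<lambda>u v. A u v - A' u v) B u v = mmul N A B u v - mmul N A' B u v"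
  unfolding mmul_def by (simp add: left_diff_distrib sum_subtractf)

lemma mmul_diff_right[simp]: "mmul N A (\<lambda>u v. B u v - B' u v) u v = mmul N A B u v - mmul N A B' u v"
  unfolding mmul_def by (simp add: right_diff_distrib sum_subtractf)

lemma mmul_if_left[simp]: "mmul N (\<lambda>u v. if Q then A u v else 0) B u v = (if Q then mmul N A B u v else 0)"
  unfolding mmul_def by simp

lemma mmul_if_right[simp]: "mmul N A (\<lambda>u v. if Q then B u v else 0) u v = (if Q then mmul N A B u v else 0)"
  unfolding mmul_def by simp


lemma supercomm_leibniz:
  assumes "(-1::complex)^(d1*d) = (-1)^(d1*d2) * (-1)^(d1*d3)"
  shows "supercomm N d1 d X (mmul N Y Z) u v =
     mmul N (supercomm N d1 d2 X Y) Z u v + (-1)^(d1*d2) * mmul N Y (supercomm N d1 d3 X Z) u v"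
proof -
  have "supercomm N d1 d X (mmul N Y Z) u v = mmul N (mmul N X Y) Z u v - (-1)^(d1*d) * mmul N Y (mmul N Z X) u v"
    unfolding supercomm_def by (simp only: mmul_assoc)
  moreover have "mmul N (supercomm N d1 d2 X Y) Z u v = mmul N (mmul N X Y) Z u v - (-1)^(d1*d2) * mmul N Y (mmul N X Z) u v"
    unfolding supercomm_def by (simp only: mmul_diff_left mmul_scal_left mmul_assoc)
  moreover have "mmul N Y (supercomm N d1 d3 X Z) u v = mmul N Y (mmul N X Z) u v - (-1)^(d1*d3) * mmul N Y (mmul N Z X) u v"
    unfolding supercomm_def by (simp only: mmul_diff_right mmul_scal_right)
  moreover have "\<And>a b c s2 s3::complex. a - (s2*s3)*c = (a - s2*b) + s2*(b - s3*c)" by (simp add: algebra_simps)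
  ultimately show ?thesis by (simp only: assms)
qed

lemma supercomm_sum:
  "supercomm N d1 d X (\<lambda>u v. \<Sum>c\<in>S. k c * F c u v) u v = (\<Sum>c\<in>S. k c * supercomm N d1 d X (F c) u v)"
proof -
  have 1: "mmul N X (\<lambda>u v. \<Sum>c\<in>S. k c * F c u v) u v = (\<Sum>c\<in>S. k c * mmul N X (F c) u v)"
    using mmul_sum_right[of N X "\<lambda>c u v. k c * F c u v" S u v] by simp
  have 2: "mmul N (\<lambda>u v. \<Sum>c\<in>S. k c * F c u v) X u v = (\<Sum>c\<in>S. k c * mmul N (F c) X u v)"
    using mmul_sum_left[of N "\<lambda>c u v. k c * F c u v" S X u v] by simp
  have 3: "\<And>s. (\<Sum>c\<in>S. k c * mmul N X (F c) u v) - s * (\<Sum>c\<in>S. k c * mmul N (F c) X u v)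
     = (\<Sum>c\<in>S. k c * (mmul N X (F c) u v - s * mmul N (F c) X u v))"
    by (simp add: sum_distrib_left right_diff_distrib sum_subtractf mult.left_commute)
  show ?thesis unfolding supercomm_def 1 2 3 ..
qed



definition trunc :: "nat \<Rightarrow> cmat \<Rightarrow> cmat" where
  "trunc N A = (\<lambda>u v. if u < N \<and> v < N then A u v else 0)"

definition P :: "nat \<times> nat \<Rightarrow> nat \<times> nat \<Rightarrow> nat" where
  "P a b = (fst a + fst b) mod 2"

definition sg :: "nat \<times> nat \<Rightarrow> complex" where
  "sg c = (-1) ^ fst c"

definition tz :: "nat \<Rightarrow> cmat \<Rightarrow> bool" where
  "tz N A \<longleftrightarrow> (\<forall>u v. \<not> (u < N \<and> v < N) \<longrightarrow> A u v = 0)"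

lemma tz_trunc: "tz N (trunc N A)" unfolding tz_def trunc_def by auto

lemma mmul_tz_out: "tz N A \<Longrightarrow> tz N B \<Longrightarrow> \<not> (u < N \<and> v < N) \<Longrightarrow> mmul N A B u v = 0"
  unfolding tz_def mmul_def by auto

lemma tz_mmul: "tz N A \<Longrightarrow> tz N B \<Longrightarrow> tz N (mmul N A B)"
  using mmul_tz_out unfolding tz_def by blast

lemma mmul_trunc: "u < N \<Longrightarrow> v < N \<Longrightarrow> mmul N (trunc N A) (trunc N B) u v = mmul N A B u v"
  unfolding mmul_def trunc_def by simp

lemma sign_cases2: "x \<in> {0..<2::nat} \<times> {0..<n} \<Longrightarrow> fst x = 0 \<or> fst x = 1"
  by auto

locale crep =
  fixes n p q :: nat and \<rho> :: "nat \<Rightarrow> nat \<Rightarrow> nat \<Rightarrow> nat \<Rightarrow> cmat"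
  assumes rep: "is_rep n p q \<rho>"
begin

definition Idx :: "(nat \<times> nat) set" where "Idx = {0..<2} \<times> {0..<n}"

definition E :: "nat \<times> nat \<Rightarrow> nat \<times> nat \<Rightarrow> cmat" where
  "E a b = trunc (p+q) (\<rho> (fst a) (fst b) (snd a) (snd b))"

fun T :: "nat \<Rightarrow> nat \<times> nat \<Rightarrow> nat \<times> nat \<Rightarrow> cmat" where
  "T 0 a b = E a b"
| "T (Suc k) a b = (\<lambda>u v. \<Sum>c\<in>Idx. sg c * mmul (p+q) (T k a c) (E c b) u v)"

lemma finite_Idx[simp]: "finite Idx" unfolding Idx_def by simp

lemma tz_E: "tz (p+q) (E a b)" unfolding E_def by (rule tz_trunc)

lemma tz_T: "tz (p+q) (T k a b)"
proof (induction k arbitrary: b)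
  case 0 thus ?case by (simp add: tz_E)
next
  case (Suc k)
  show ?case unfolding tz_def using mmul_tz_out[OF Suc tz_E] by simp
qed

lemma E_law:
  assumes "x \<in> Idx" "y \<in> Idx" "a \<in> Idx" "b \<in> Idx"
  shows "supercomm (p+q) (P x y) (P a b) (E x y) (E a b) =
    (\<lambda>u v. (if y = a then E x b u v else 0) - (-1)^(P x y * P a b) * (if b = x then E a y u v else 0))"
proof (intro ext)
  fix u v
  show "supercomm (p+q) (P x y) (P a b) (E x y) (E a b) u v =
    (if y = a then E x b u v else 0) - (-1)^(P x y * P a b) * (if b = x then E a y u v else 0)"
  proof (cases "u < p+q \<and> v < p+q")
    case True
    obtain s1 i1 where x: "x = (s1,i1)" "s1 < 2" "i1 < n" using assms(1) unfolding Idx_def by auto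
    obtain s2 i2 where y: "y = (s2,i2)" "s2 < 2" "i2 < n" using assms(2) unfolding Idx_def by auto
    obtain s3 i3 where a: "a = (s3,i3)" "s3 < 2" "i3 < n" using assms(3) unfolding Idx_def by auto
    obtain s4 i4 where b: "b = (s4,i4)" "s4 < 2" "i4 < n" using assms(4) unfolding Idx_def by auto
    have R: "supercomm (p+q) (epar s1 s2) (epar s3 s4) (\<rho> s1 s2 i1 i2) (\<rho> s3 s4 i3 i4) u v =
          (if s2 = s3 \<and> i2 = i3 then \<rho> s1 s4 i1 i4 u v else 0)
          - (-1) ^ (epar s1 s2 * epar s3 s4) *
            (if s4 = s1 \<and> i4 = i1 then \<rho> s3 s2 i3 i2 u v else 0)"
      using conjunct2[OF rep[unfolded is_rep_def], rule_format, OF x(2) y(2) a(2) b(2) x(3) y(3) a(3) b(3)] True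
      by simp
    have 1: "supercomm (p+q) (P x y) (P a b) (E x y) (E a b) u v
       = supercomm (p+q) (epar s1 s2) (epar s3 s4) (\<rho> s1 s2 i1 i2) (\<rho> s3 s4 i3 i4) u v"
      unfolding x y a b E_def supercomm_def using True by (simp add: mmul_trunc P_def epar_def)
    show ?thesis unfolding 1 R using True unfolding x y a b E_def
      by (simp add: P_def epar_def trunc_def)
  next
    case False
    thus ?thesis unfolding supercomm_def using mmul_tz_out[OF tz_E tz_E False] tz_E[unfolded tz_def]
      by auto
  qed
qed

lemma sign1:
  assumes "x \<in> Idx" "y \<in> Idx" "a \<in> Idx" "b \<in> Idx" "c \<in> Idx"
  shows "(-1::complex)^(P x y * P a b) = (-1)^(P x y * P a c) * (-1)^(P x y * P c b)"
  using sign_cases2[OF assms(1)[unfolded Idx_def]] sign_cases2[OF assms(2)[unfolded Idx_def]]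
    sign_cases2[OF assms(3)[unfolded Idx_def]] sign_cases2[OF assms(4)[unfolded Idx_def]]
    sign_cases2[OF assms(5)[unfolded Idx_def]]
  unfolding P_def by auto

lemma sign2:
  assumes "x \<in> Idx" "y \<in> Idx" "a \<in> Idx"
  shows "sg x * (-1::complex)^(P x y * P a x) = sg y * (-1)^(P x y * P a y)"
  using sign_cases2[OF assms(1)[unfolded Idx_def]] sign_cases2[OF assms(2)[unfolded Idx_def]]
    sign_cases2[OF assms(3)[unfolded Idx_def]]
  unfolding P_def sg_def by auto

lemma T_law:
  assumes "x \<in> Idx" "y \<in> Idx" "a \<in> Idx" "b \<in> Idx"
  shows "supercomm (p+q) (P x y) (P a b) (E x y) (T k a b) =
    (\<lambda>u v. (if y = a then T k x b u v else 0) - (-1)^(P x y * P a b) * (if b = x then T k a y u v else 0))"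
  using assms(2,4)
proof (induction k arbitrary: b y)
  case 0
  show ?case unfolding T.simps(1) by (rule E_law[OF assms(1) 0(1) assms(3) 0(2)])
next
  case (Suc k)
  let ?N = "p+q"
  let ?s = "\<lambda>c. (-1::complex)^(P x y * P a c)"
  let ?t = "\<lambda>c. (-1::complex)^(P x y * P c b)"
  show ?case
  proof (intro ext)
    fix u v
    have "supercomm ?N (P x y) (P a b) (E x y) (T (Suc k) a b) u v
      = (\<Sum>c\<in>Idx. sg c * supercomm ?N (P x y) (P a b) (E x y) (mmul ?N (T k a c) (E c b)) u v)"
      unfolding T.simps by (rule supercomm_sum)
    also have "\<dots> = (\<Sum>c\<in>Idx. sg c * (mmul ?N (supercomm ?N (P x y) (P a c) (E x y) (T k a c)) (E c b) u v
        + ?s c * mmul ?N (T k a c) (supercomm ?N (P x y) (P c b) (E x y) (E c b)) u v))"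
      by (intro sum.cong refl arg_cong2[where f="(*)"] supercomm_leibniz sign1[OF assms(1) Suc.prems(1) assms(3) Suc.prems(2)])
    also have "\<dots> = (\<Sum>c\<in>Idx. sg c * (
          (if y = a then mmul ?N (T k x c) (E c b) u v else 0)
        - ?s c * (if c = x then mmul ?N (T k a y) (E c b) u v else 0)
        + ?s c * ((if y = c then mmul ?N (T k a c) (E x b) u v else 0)
            - ?t c * (if b = x then mmul ?N (T k a c) (E c y) u v else 0))))"
    proof (intro sum.cong refl)
      fix c assume c: "c \<in> Idx"
      show "sg c * (mmul ?N (supercomm ?N (P x y) (P a c) (E x y) (T k a c)) (E c b) u v
        + ?s c * mmul ?N (T k a c) (supercomm ?N (P x y) (P c b) (E x y) (E c b)) u v) = sg c * (
          (if y = a then mmul ?N (T k x c) (E c b) u v else 0)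
        - ?s c * (if c = x then mmul ?N (T k a y) (E c b) u v else 0)
        + ?s c * ((if y = c then mmul ?N (T k a c) (E x b) u v else 0)
            - ?t c * (if b = x then mmul ?N (T k a c) (E c y) u v else 0)))"
        unfolding Suc.IH[OF Suc.prems(1) c] E_law[OF assms(1) Suc.prems(1) c Suc.prems(2)]
        by (simp only: mmul_diff_left mmul_diff_right mmul_scal_left mmul_scal_right mmul_if_left mmul_if_right)
    qed
    also have "\<dots> = (if y = a then T (Suc k) x b u v else 0)
        - sg x * ?s x * mmul ?N (T k a y) (E x b) u v
        + sg y * ?s y * mmul ?N (T k a y) (E x b) u v
        - (if b = x then (-1)^(P x y * P a b) * T (Suc k) a y u v else 0)"
    proof -
      let ?A = "\<lambda>c. (if y = a then mmul ?N (T k x c) (E c b) u v else 0)"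
      let ?B = "\<lambda>c. (if c = x then mmul ?N (T k a y) (E c b) u v else 0)"
      let ?C = "\<lambda>c. (if y = c then mmul ?N (T k a c) (E x b) u v else 0)"
      let ?D = "\<lambda>c. (if b = x then mmul ?N (T k a c) (E c y) u v else 0)"
      have split: "(\<Sum>c\<in>Idx. sg c * (?A c - ?s c * ?B c + ?s c * (?C c - ?t c * ?D c)))
        = (\<Sum>c\<in>Idx. sg c * ?A c) - (\<Sum>c\<in>Idx. sg c * ?s c * ?B c) + (\<Sum>c\<in>Idx. sg c * ?s c * ?C c)
          - (\<Sum>c\<in>Idx. sg c * ?s c * ?t c * ?D c)"
      proof -
        have "(\<Sum>c\<in>Idx. sg c * (?A c - ?s c * ?B c + ?s c * (?C c - ?t c * ?D c)))
          = (\<Sum>c\<in>Idx. sg c * ?A c - sg c * ?s c * ?B c + sg c * ?s c * ?C c - sg c * ?s c * ?t c * ?D c)"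
          by (intro sum.cong refl) (simp only: algebra_simps)
        thus ?thesis by (simp only: sum.distrib sum_subtractf)
      qed
      have hA: "(\<Sum>c\<in>Idx. sg c * ?A c) = (if y = a then T (Suc k) x b u v else 0)"
        by simp
      have hB: "(\<Sum>c\<in>Idx. sg c * ?s c * ?B c) = sg x * ?s x * mmul ?N (T k a y) (E x b) u v"
        using assms(1) by (simp add: if_distrib[where f="\<lambda>z. _ * z"] sum.delta' cong: if_cong)
      have hC: "(\<Sum>c\<in>Idx. sg c * ?s c * ?C c) = sg y * ?s y * mmul ?N (T k a y) (E x b) u v"
        using Suc.prems(1) by (simp add: if_distrib[where f="\<lambda>z. _ * z"] sum.delta cong: if_cong)
      have hD: "(\<Sum>c\<in>Idx. sg c * ?s c * ?t c * ?D c) = (if b = x then (-1)^(P x y * P a b) * T (Suc k) a y u v else 0)"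
      proof (cases "b = x")
        case True
        have "(\<Sum>c\<in>Idx. sg c * ?s c * ?t c * ?D c) = (\<Sum>c\<in>Idx. (-1)^(P x y * P a b) * (sg c * mmul ?N (T k a c) (E c y) u v))"
        proof (intro sum.cong refl)
          fix c assume c: "c \<in> Idx"
          have "?s c * ?t c = (-1)^(P x y * P a b)"
            using sign1[OF assms(1) Suc.prems(1) assms(3) Suc.prems(2) c] by simp
          thus "sg c * ?s c * ?t c * ?D c = (-1)^(P x y * P a b) * (sg c * mmul ?N (T k a c) (E c y) u v)"
            using True by (simp add: algebra_simps)
        qed
        thus ?thesis using True by (simp add: sum_distrib_left)
      qed simp
      show ?thesis unfolding split hA hB hC hD by simp
    qed
    also have "\<dots> = (if y = a then T (Suc k) x b u v else 0) - (-1)^(P x y * P a b) * (if b = x then T (Suc k) a y u v else 0)"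
      using sign2[OF assms(1) Suc.prems(1) assms(3)] by simp
    finally show "supercomm ?N (P x y) (P a b) (E x y) (T (Suc k) a b) u v =
      (if y = a then T (Suc k) x b u v else 0) - (-1)^(P x y * P a b) * (if b = x then T (Suc k) a y u v else 0)" .
  qed
qed

end


lemma sum_PiE_insert:
  assumes "x \<notin> S"
  shows "(\<Sum>f\<in>Pi\<^sub>E (insert x S) T. F f) = (\<Sum>y\<in>T x. \<Sum>g\<in>Pi\<^sub>E S T. F (g(x:=y)))"
proof -
  have "(\<Sum>f\<in>Pi\<^sub>E (insert x S) T. F f) = (\<Sum>f\<in>(\<lambda>(y, g). g(x := y)) ` (T x \<times> Pi\<^sub>E S T). F f)"
    by (simp only: PiE_insert_eq)
  also have "\<dots> = (\<Sum>yg\<in>T x \<times> Pi\<^sub>E S T. F ((\<lambda>(y, g). g(x := y)) yg))"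
    by (rule sum.reindex[OF inj_combinator[OF assms], unfolded comp_def])
  also have "\<dots> = (\<Sum>y\<in>T x. \<Sum>g\<in>Pi\<^sub>E S T. F (g(x:=y)))"
    by (simp add: sum.cartesian_product split_beta)
  finally show ?thesis .
qed

fun lprod :: "nat \<Rightarrow> cmat list \<Rightarrow> cmat" where
  "lprod N [] = mone"
| "lprod N [A] = A"
| "lprod N (A # B # As) = mmul N A (lprod N (B # As))"

lemma lprod_append1: "As \<noteq> [] \<Longrightarrow> lprod N (As @ [B]) = mmul N (lprod N As) B"
proof (induction As rule: induct_list012)
  case (3 A C As)
  show ?case using 3(2) by (cases As) (simp_all add: mmul_assoc)
qed auto

lemma mmul_cong_right: "(\<And>b. b < N \<Longrightarrow> R b v = R' b v) \<Longrightarrow> mmul N A R u v = mmul N A R' u v"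
  unfolding mmul_def by simp

lemma mlist_prod_lprod: "As \<noteq> [] \<Longrightarrow> v < N \<Longrightarrow> mlist_prod N As u v = lprod N As u v"
proof (induction As arbitrary: u rule: induct_list012)
  case (2 A)
  have "(\<Sum>b<N. A u b * (if b = v then 1 else 0)) = (\<Sum>b<N. if b = v then A u b else 0)"
    by (intro sum.cong) auto
  thus ?case using 2 unfolding mlist_prod_def by (simp add: mmul_def mone_def)
next
  case (3 A B As)
  have "mlist_prod N (A # B # As) u v = mmul N A (mlist_prod N (B # As)) u v"
    unfolding mlist_prod_def by simp
  also have "\<dots> = mmul N A (lprod N (B # As)) u v"
    by (rule mmul_cong_right) (use 3 in simp)
  finally show ?case by simp
qed auto

lemma lprod_trunc: "u < N \<Longrightarrow> v < N \<Longrightarrow> lprod N As u v = lprod N (map (trunc N) As) u v"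
proof (induction As arbitrary: u rule: induct_list012)
  case (2 A) thus ?case by (simp add: trunc_def)
next
  case (3 A B As)
  have "lprod N (A # B # As) u v = mmul N A (lprod N (B # As)) u v" by simp
  also have "\<dots> = mmul N A (lprod N (map (trunc N) (B # As))) u v"
    by (rule mmul_cong_right) (use 3 in simp)
  also have "\<dots> = mmul N (trunc N A) (lprod N (map (trunc N) (B # As))) u v"
    using 3 unfolding mmul_def trunc_def by simp
  finally show ?case by simp
qed auto

definition pt :: "nat \<Rightarrow> nat \<times> nat \<Rightarrow> nat \<times> nat \<Rightarrow> (nat \<Rightarrow> nat) \<Rightarrow> (nat \<Rightarrow> nat) \<Rightarrow> nat \<Rightarrow> nat \<times> nat" where
  "pt k a b s j i = (if i = 0 then a else if i \<le> k then (s i, j i) else b)"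

context crep
begin

definition chain :: "nat \<Rightarrow> nat \<times> nat \<Rightarrow> nat \<times> nat \<Rightarrow> (nat \<Rightarrow> nat) \<Rightarrow> (nat \<Rightarrow> nat) \<Rightarrow> cmat" where
  "chain k a b s j = lprod (p+q) (map (\<lambda>i. E (pt k a b s j i) (pt k a b s j (Suc i))) [0..<Suc k])"

lemma chain_Suc:
  "chain (Suc k) a b (g(Suc k := \<sigma>)) (h(Suc k := i)) = mmul (p+q) (chain k a (\<sigma>, i) g h) (E (\<sigma>, i) b)"
proof -
  let ?f = "\<lambda>ii. E (pt (Suc k) a b (g(Suc k := \<sigma>)) (h(Suc k := i)) ii) (pt (Suc k) a b (g(Suc k := \<sigma>)) (h(Suc k := i)) (Suc ii))"
  let ?f' = "\<lambda>ii. E (pt k a (\<sigma>, i) g h ii) (pt k a (\<sigma>, i) g h (Suc ii))"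
  have "map ?f [0..<Suc (Suc k)] = map ?f [0..<Suc k] @ [?f (Suc k)]" by simp
  moreover have "map ?f [0..<Suc k] = map ?f' [0..<Suc k]"
    by (rule map_cong) (auto simp: pt_def)
  moreover have "?f (Suc k) = E (\<sigma>, i) b" by (simp add: pt_def)
  ultimately show ?thesis unfolding chain_def by (simp add: lprod_append1 del: upt_Suc)
qed

lemma T_chain:
  "T k a b = (\<lambda>u v. \<Sum>s\<in>{1..<Suc k} \<rightarrow>\<^sub>E {0..<2}. \<Sum>j\<in>{1..<Suc k} \<rightarrow>\<^sub>E {0..<n}.
      (-1)^(\<Sum>i\<in>{1..<Suc k}. s i) * chain k a b s j u v)"
proof (induction k arbitrary: b)
  case 0
  show ?case by (intro ext) (simp add: chain_def pt_def)
next
  case (Suc k)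
  show ?case
  proof (intro ext)
    fix u v
    let ?S = "{1..<Suc k} \<rightarrow>\<^sub>E {0..<2::nat}"
    let ?J = "{1..<Suc k} \<rightarrow>\<^sub>E {0..<n}"
    have ins: "{1..<Suc (Suc k)} = insert (Suc k) {1..<Suc k}" by auto
    have nin: "Suc k \<notin> {1..<Suc k}" by simp
    have "(\<Sum>s\<in>{1..<Suc (Suc k)} \<rightarrow>\<^sub>E {0..<2}. \<Sum>j\<in>{1..<Suc (Suc k)} \<rightarrow>\<^sub>E {0..<n}.
      (-1)^(\<Sum>i\<in>{1..<Suc (Suc k)}. s i) * chain (Suc k) a b s j u v)
      = (\<Sum>\<sigma>\<in>{0..<2}. \<Sum>g\<in>?S. \<Sum>i\<in>{0..<n}. \<Sum>h\<in>?J.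
      (-1)^(\<Sum>ii\<in>{1..<Suc (Suc k)}. (g(Suc k := \<sigma>)) ii) * chain (Suc k) a b (g(Suc k := \<sigma>)) (h(Suc k := i)) u v)"
      unfolding ins by (simp only: sum_PiE_insert[OF nin])
    also have "\<dots> = (\<Sum>\<sigma>\<in>{0..<2}. \<Sum>i\<in>{0..<n}. \<Sum>g\<in>?S. \<Sum>h\<in>?J.
      (-1)^(\<Sum>ii\<in>{1..<Suc (Suc k)}. (g(Suc k := \<sigma>)) ii) * chain (Suc k) a b (g(Suc k := \<sigma>)) (h(Suc k := i)) u v)"
      by (intro sum.cong refl sum.swap)
    also have "\<dots> = (\<Sum>\<sigma>\<in>{0..<2}. \<Sum>i\<in>{0..<n}. sg (\<sigma>, i) * mmul (p+q) (T k a (\<sigma>, i)) (E (\<sigma>, i) b) u v)"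
    proof (intro sum.cong refl)
      fix \<sigma> i :: nat
      have sgn: "\<And>g :: nat \<Rightarrow> nat. (\<Sum>ii\<in>{1..<Suc (Suc k)}. (g(Suc k := \<sigma>)) ii) = (\<Sum>ii\<in>{1..<Suc k}. g ii) + \<sigma>"
        unfolding ins by (simp add: sum.cong[of "{1..<Suc k}" _ "g(Suc k := \<sigma>)" g] add.commute)
      have "(\<Sum>g\<in>?S. \<Sum>h\<in>?J.
        (-1::complex)^(\<Sum>ii\<in>{1..<Suc (Suc k)}. (g(Suc k := \<sigma>)) ii) * chain (Suc k) a b (g(Suc k := \<sigma>)) (h(Suc k := i)) u v)
        = (\<Sum>g\<in>?S. \<Sum>h\<in>?J. sg (\<sigma>, i) * ((-1)^(\<Sum>ii\<in>{1..<Suc k}. g ii) * mmul (p+q) (chain k a (\<sigma>, i) g h) (E (\<sigma>, i) b) u v))"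
        by (simp add: sgn chain_Suc sg_def power_add mult_ac)
      also have "\<dots> = sg (\<sigma>, i) * mmul (p+q) (\<lambda>u v. \<Sum>g\<in>?S. \<Sum>h\<in>?J. (-1)^(\<Sum>ii\<in>{1..<Suc k}. g ii) * chain k a (\<sigma>, i) g h u v) (E (\<sigma>, i) b) u v"
        by (simp add: mmul_sum_left sum_distrib_left)
      also have "\<dots> = sg (\<sigma>, i) * mmul (p+q) (T k a (\<sigma>, i)) (E (\<sigma>, i) b) u v"
        unfolding Suc.IH ..
      finally show "(\<Sum>g\<in>?S. \<Sum>h\<in>?J.
        (-1)^(\<Sum>ii\<in>{1..<Suc (Suc k)}. (g(Suc k := \<sigma>)) ii) * chain (Suc k) a b (g(Suc k := \<sigma>)) (h(Suc k := i)) u v)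
        = sg (\<sigma>, i) * mmul (p+q) (T k a (\<sigma>, i)) (E (\<sigma>, i) b) u v" .
    qed
    also have "\<dots> = T (Suc k) a b u v"
      by (simp add: Idx_def sum.cartesian_product)
    finally show "T (Suc k) a b u v = (\<Sum>s\<in>{1..<Suc (Suc k)} \<rightarrow>\<^sub>E {0..<2}. \<Sum>j\<in>{1..<Suc (Suc k)} \<rightarrow>\<^sub>E {0..<n}.
      (-1)^(\<Sum>i\<in>{1..<Suc (Suc k)}. s i) * chain (Suc k) a b s j u v)" by simp
  qed
qed

lemma casimir_bridge:
  assumes uv: "u < p+q" "v < p+q"
  shows "casimir_image n p q \<rho> (Suc k) u v = (\<Sum>a\<in>Idx. T k a a u v)"
proof -
  let ?S = "{1..<Suc k} \<rightarrow>\<^sub>E {0..<2::nat}"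
  let ?J = "{1..<Suc k} \<rightarrow>\<^sub>E {0..<n}"
  let ?F = "\<lambda>s j. (-1::complex) ^ (\<Sum>i\<in>{1..<Suc k}. s i) *
           mlist_prod (p+q) (map (\<lambda>i. \<rho> (s i) (s ((i+1) mod (Suc k))) (j i) (j ((i+1) mod (Suc k)))) [0..<Suc k]) u v"
  have ins: "{0..<Suc k} = insert 0 {1..<Suc k}" by auto
  have nin: "(0::nat) \<notin> {1..<Suc k}" by simp
  have "casimir_image n p q \<rho> (Suc k) u v = (\<Sum>s\<in>{0..<Suc k} \<rightarrow>\<^sub>E {0..<2}. \<Sum>j\<in>{0..<Suc k} \<rightarrow>\<^sub>E {0..<n}. ?F s j)"
    unfolding casimir_image_def by simp
  also have "\<dots> = (\<Sum>\<sigma>\<in>{0..<2}. \<Sum>g\<in>?S. \<Sum>i\<in>{0..<n}. \<Sum>h\<in>?J. ?F (g(0:=\<sigma>)) (h(0:=i)))"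
    unfolding ins by (simp only: sum_PiE_insert[OF nin])
  also have "\<dots> = (\<Sum>\<sigma>\<in>{0..<2}. \<Sum>i\<in>{0..<n}. \<Sum>g\<in>?S. \<Sum>h\<in>?J. ?F (g(0:=\<sigma>)) (h(0:=i)))"
    by (intro sum.cong refl sum.swap)
  also have "\<dots> = (\<Sum>\<sigma>\<in>{0..<2}. \<Sum>i\<in>{0..<n}. T k (\<sigma>, i) (\<sigma>, i) u v)"
  proof (intro sum.cong refl)
    fix \<sigma> i :: nat
    have "(\<Sum>g\<in>?S. \<Sum>h\<in>?J. ?F (g(0:=\<sigma>)) (h(0:=i))) =
      (\<Sum>g\<in>?S. \<Sum>h\<in>?J. (-1)^(\<Sum>ii\<in>{1..<Suc k}. g ii) * chain k (\<sigma>, i) (\<sigma>, i) g h u v)"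
    proof (intro sum.cong refl)
      fix g h :: "nat \<Rightarrow> nat"
      let ?s = "g(0:=\<sigma>)" and ?j = "h(0:=i)"
      have sgn: "(\<Sum>ii\<in>{1..<Suc k}. ?s ii) = (\<Sum>ii\<in>{1..<Suc k}. g ii)"
        by (intro sum.cong) auto
      have ne: "map (\<lambda>ii. \<rho> (?s ii) (?s ((ii+1) mod (Suc k))) (?j ii) (?j ((ii+1) mod (Suc k)))) [0..<Suc k] \<noteq> []"
        by simp
      have "mlist_prod (p+q) (map (\<lambda>ii. \<rho> (?s ii) (?s ((ii+1) mod (Suc k))) (?j ii) (?j ((ii+1) mod (Suc k)))) [0..<Suc k]) u v
        = lprod (p+q) (map (trunc (p+q)) (map (\<lambda>ii. \<rho> (?s ii) (?s ((ii+1) mod (Suc k))) (?j ii) (?j ((ii+1) mod (Suc k)))) [0..<Suc k])) u v"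
        by (rule trans[OF mlist_prod_lprod[OF ne uv(2)] lprod_trunc[OF uv]])
      also have "map (trunc (p+q)) (map (\<lambda>ii. \<rho> (?s ii) (?s ((ii+1) mod (Suc k))) (?j ii) (?j ((ii+1) mod (Suc k)))) [0..<Suc k])
        = map (\<lambda>ii. E (pt k (\<sigma>, i) (\<sigma>, i) g h ii) (pt k (\<sigma>, i) (\<sigma>, i) g h (Suc ii))) [0..<Suc k]"
        unfolding map_map
      proof (rule map_cong[OF refl])
        fix ii assume "ii \<in> set [0..<Suc k]"
        hence ii: "ii \<le> k" by auto
        have 1: "pt k (\<sigma>, i) (\<sigma>, i) g h ii = (?s ii, ?j ii)" using ii by (simp add: pt_def)
        have 2: "pt k (\<sigma>, i) (\<sigma>, i) g h (Suc ii) = (?s ((ii+1) mod (Suc k)), ?j ((ii+1) mod (Suc k)))"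
        proof (cases "ii = k")
          case True thus ?thesis by (simp add: pt_def)
        next
          case False thus ?thesis using ii by (simp add: pt_def)
        qed
        show "(trunc (p+q) \<circ> (\<lambda>ii. \<rho> (?s ii) (?s ((ii+1) mod (Suc k))) (?j ii) (?j ((ii+1) mod (Suc k))))) ii
          = E (pt k (\<sigma>, i) (\<sigma>, i) g h ii) (pt k (\<sigma>, i) (\<sigma>, i) g h (Suc ii))"
          unfolding 1 2 E_def by simp
      qed
      finally show "?F ?s ?j = (-1)^(\<Sum>ii\<in>{1..<Suc k}. g ii) * chain k (\<sigma>, i) (\<sigma>, i) g h u v"
        unfolding sgn chain_def by simp
    qed
    also have "\<dots> = T k (\<sigma>, i) (\<sigma>, i) u v" unfolding T_chain by simp
    finally show "(\<Sum>g\<in>?S. \<Sum>h\<in>?J. ?F (g(0:=\<sigma>)) (h(0:=i))) = T k (\<sigma>, i) (\<sigma>, i) u v" .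
  qed
  also have "\<dots> = (\<Sum>a\<in>Idx. T k a a u v)"
    by (simp add: Idx_def sum.cartesian_product)
  finally show ?thesis .
qed

end


lemma homog_mmul:
  assumes "homog p q d1 A" "homog p q d2 B"
  shows "homog p q ((d1+d2) mod 2) (mmul (p+q) A B)"
  unfolding homog_def
proof (intro allI impI)
  fix a b assume ab: "a < p+q" "b < p+q" and ne: "mmul (p+q) A B a b \<noteq> 0"
  obtain c where c: "c \<in> {..<p+q}" "A a c * B c b \<noteq> 0"
    using ne unfolding mmul_def by (rule sum.not_neutral_contains_not_neutral)
  hence "A a c \<noteq> 0" "B c b \<noteq> 0" by auto
  hence "(vpar p a + vpar p c) mod 2 = d1" "(vpar p c + vpar p b) mod 2 = d2"
    using assms(1)[unfolded homog_def, rule_format, OF ab(1)] c(1)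
      assms(2)[unfolded homog_def, rule_format, OF _ ab(2)] by auto
  hence "d1 = (vpar p a + vpar p c) mod 2" "d2 = (vpar p c + vpar p b) mod 2" by simp_all
  thus "(vpar p a + vpar p b) mod 2 = (d1 + d2) mod 2" unfolding vpar_def by (simp split: if_splits)
qed

lemma homog_sum:
  assumes "\<And>c. c \<in> S \<Longrightarrow> homog p q d (F c)"
  shows "homog p q d (\<lambda>u v. \<Sum>c\<in>S. k c * F c u v)"
  unfolding homog_def
proof (intro allI impI)
  fix a b assume ab: "a < p+q" "b < p+q" and ne: "(\<Sum>c\<in>S. k c * F c a b) \<noteq> 0"
  obtain c where c: "c \<in> S" "k c * F c a b \<noteq> 0"
    using ne by (rule sum.not_neutral_contains_not_neutral)
  thus "(vpar p a + vpar p b) mod 2 = d" using assms[OF c(1)] ab unfolding homog_def by auto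
qed

lemma homog_sum':
  assumes "\<And>c. c \<in> S \<Longrightarrow> homog p q d (F c)"
  shows "homog p q d (\<lambda>u v. \<Sum>c\<in>S. F c u v)"
  using homog_sum[of S p q d F "\<lambda>_. 1"] assms by simp

lemma homog_trunc: "homog p q d A \<Longrightarrow> homog p q d (trunc (p+q) A)"
  unfolding homog_def trunc_def by auto

definition str :: "nat \<Rightarrow> nat \<Rightarrow> cmat \<Rightarrow> complex" where
  "str N p X = (\<Sum>u<N. (-1)^(vpar p u) * X u u)"

lemma str_odd:
  assumes X: "homog p q 1 X" and Y: "homog p q 1 Y"
  shows "str (p+q) p (supercomm (p+q) 1 1 X Y) = 0"
proof -
  let ?N = "p+q"
  let ?s = "\<lambda>u. (-1::complex)^(vpar p u)"
  have "str ?N p (supercomm ?N 1 1 X Y) = (\<Sum>u<?N. ?s u * (\<Sum>b<?N. X u b * Y b u)) + (\<Sum>u<?N. ?s u * (\<Sum>b<?N. Y u b * X b u))"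
    unfolding str_def supercomm_def mmul_def by (simp add: sum.distrib algebra_simps)
  also have "(\<Sum>u<?N. ?s u * (\<Sum>b<?N. Y u b * X b u)) = (\<Sum>u<?N. \<Sum>b<?N. ?s b * (X u b * Y b u))"
  proof -
    have "(\<Sum>u<?N. ?s u * (\<Sum>b<?N. Y u b * X b u)) = (\<Sum>u<?N. \<Sum>b<?N. ?s u * (Y u b * X b u))"
      by (simp add: sum_distrib_left)
    also have "\<dots> = (\<Sum>b<?N. \<Sum>u<?N. ?s u * (Y u b * X b u))" by (rule sum.swap)
    also have "\<dots> = (\<Sum>u<?N. \<Sum>b<?N. ?s b * (X u b * Y b u))" by (simp add: mult_ac)
    finally show ?thesis .
  qed
  also have "(\<Sum>u<?N. ?s u * (\<Sum>b<?N. X u b * Y b u)) = (\<Sum>u<?N. \<Sum>b<?N. ?s u * (X u b * Y b u))"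
    by (simp add: sum_distrib_left)
  also have "(\<Sum>u<?N. \<Sum>b<?N. ?s u * (X u b * Y b u)) + (\<Sum>u<?N. \<Sum>b<?N. ?s b * (X u b * Y b u))
     = (\<Sum>u<?N. \<Sum>b<?N. (?s u + ?s b) * (X u b * Y b u))"
    by (simp add: sum.distrib algebra_simps)
  also have "\<dots> = 0"
  proof (intro sum.neutral ballI)
    fix u b assume u: "u \<in> {..<?N}" and b: "b \<in> {..<?N}"
    show "(?s u + ?s b) * (X u b * Y b u) = 0"
    proof (cases "X u b = 0")
      case False
      hence "(vpar p u + vpar p b) mod 2 = 1" using X u b unfolding homog_def by auto
      hence "?s u + ?s b = 0" unfolding vpar_def by (auto split: if_splits)
      thus ?thesis by simp
    qed simp
  qed
  finally show ?thesis .
qed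

context crep
begin

lemma homog_E:
  assumes "a \<in> Idx" "b \<in> Idx"
  shows "homog p q (P a b) (E a b)"
proof -
  obtain s1 i1 where a: "a = (s1,i1)" "s1 < 2" "i1 < n" using assms(1) unfolding Idx_def by auto
  obtain s2 i2 where b: "b = (s2,i2)" "s2 < 2" "i2 < n" using assms(2) unfolding Idx_def by auto
  have "homog p q (epar s1 s2) (\<rho> s1 s2 i1 i2)"
    using conjunct1[OF rep[unfolded is_rep_def], rule_format, OF a(2) b(2) a(3) b(3)] .
  hence "homog p q (P a b) (\<rho> s1 s2 i1 i2)" unfolding a b P_def epar_def by simp
  thus ?thesis unfolding E_def a b by (simp add: homog_trunc)
qed

lemma mod2_aux: "((a+c) mod 2 + (c+b) mod 2) mod 2 = ((a+b) mod 2::nat)"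
proof -
  have "((a+c) mod 2 + (c+b) mod 2) mod 2 = (a+c+(c+b)) mod 2" by (rule mod_add_eq)
  also have "a+c+(c+b) = (a+b) + c*2" by simp
  also have "((a+b) + c*2) mod 2 = (a+b) mod 2" by (rule mod_mult_self1)
  finally show ?thesis .
qed

lemma homog_T: "a \<in> Idx \<Longrightarrow> b \<in> Idx \<Longrightarrow> homog p q (P a b) (T k a b)"
proof (induction k arbitrary: b)
  case 0 thus ?case unfolding T.simps by (rule homog_E)
next
  case (Suc k)
  show ?case unfolding T.simps
  proof (rule homog_sum)
    fix c assume c: "c \<in> Idx"
    have "homog p q ((P a c + P c b) mod 2) (mmul (p+q) (T k a c) (E c b))"
      by (rule homog_mmul[OF Suc.IH[OF Suc.prems(1) c] homog_E[OF c Suc.prems(2)]])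
    moreover have "(P a c + P c b) mod 2 = P a b" unfolding P_def by (rule mod2_aux)
    ultimately show "homog p q (P a b) (mmul (p+q) (T k a c) (E c b))" by simp
  qed
qed

definition Cas :: "nat \<Rightarrow> cmat" where
  "Cas k = (\<lambda>u v. \<Sum>a\<in>Idx. T k a a u v)"

lemma P_diag[simp]: "P a a = 0" unfolding P_def by simp

lemma Cas_even: "homog p q 0 (Cas k)"
  unfolding Cas_def by (rule homog_sum') (use homog_T in fastforce)

lemma Cas_comm:
  assumes x: "x \<in> Idx" and y: "y \<in> Idx"
  shows "mmul (p+q) (E x y) (Cas k) u v = mmul (p+q) (Cas k) (E x y) u v"
proof -
  have "mmul (p+q) (E x y) (Cas k) u v - mmul (p+q) (Cas k) (E x y) u v
     = (\<Sum>a\<in>Idx. supercomm (p+q) (P x y) (P a a) (E x y) (T k a a) u v)"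
    unfolding Cas_def supercomm_def by (simp add: mmul_sum_left mmul_sum_right sum_subtractf)
  also have "\<dots> = (\<Sum>a\<in>Idx. (if y = a then T k x a u v else 0) - (if a = x then T k a y u v else 0))"
  proof (intro sum.cong refl)
    fix a assume a: "a \<in> Idx"
    show "supercomm (p+q) (P x y) (P a a) (E x y) (T k a a) u v = (if y = a then T k x a u v else 0) - (if a = x then T k a y u v else 0)"
      using fun_cong[OF fun_cong[OF T_law[OF x y a a, of k]], of u v] by simp
  qed
  also have "\<dots> = 0" using x y by (simp add: sum_subtractf)
  finally show ?thesis by simp
qed

lemma Cas_str: "str (p+q) p (Cas k) = 0"
proof -
  let ?X = "\<lambda>i. E (0,i) (1,i)" and ?Y = "\<lambda>i. T k (1,i) (0,i)"
  have idx: "\<And>i. i < n \<Longrightarrow> (0,i) \<in> Idx \<and> (1,i) \<in> Idx" unfolding Idx_def by auto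
  have sc: "\<And>i. i < n \<Longrightarrow> supercomm (p+q) 1 1 (?X i) (?Y i) u u = T k (0,i) (0,i) u u + T k (1,i) (1,i) u u" for u
  proof -
    fix i assume i: "i < n"
    have "P (0,i) (1::nat,i) = 1" unfolding P_def by simp
    thus "supercomm (p+q) 1 1 (?X i) (?Y i) u u = T k (0,i) (0,i) u u + T k (1,i) (1,i) u u"
      using T_law[of "(0,i)" "(1,i)" "(1,i)" "(0,i)" k] idx[OF i] by (simp add: P_def)
  qed
  have "Cas k u u = (\<Sum>i<n. supercomm (p+q) 1 1 (?X i) (?Y i) u u)" for u
  proof -
    have "Cas k u u = (\<Sum>\<sigma>\<in>{0..<2::nat}. \<Sum>i\<in>{0..<n}. T k (\<sigma>,i) (\<sigma>,i) u u)"
      unfolding Cas_def Idx_def by (simp add: sum.cartesian_product)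
    also have "\<dots> = (\<Sum>i<n. T k (0,i) (0,i) u u + T k (1,i) (1,i) u u)"
      by (simp add: numeral_2_eq_2 atLeast0LessThan sum.distrib)
    also have "\<dots> = (\<Sum>i<n. supercomm (p+q) 1 1 (?X i) (?Y i) u u)"
      by (intro sum.cong refl) (rule sc[symmetric], simp)
    finally show ?thesis .
  qed
  hence "str (p+q) p (Cas k) = (\<Sum>i<n. str (p+q) p (supercomm (p+q) 1 1 (?X i) (?Y i)))"
  proof -
    assume H: "\<And>u. Cas k u u = (\<Sum>i<n. supercomm (p+q) 1 1 (?X i) (?Y i) u u)"
    have "str (p+q) p (Cas k) = (\<Sum>u<p+q. \<Sum>i<n. (-1)^(vpar p u) * supercomm (p+q) 1 1 (?X i) (?Y i) u u)"
      unfolding str_def H by (simp add: sum_distrib_left)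
    also have "\<dots> = (\<Sum>i<n. \<Sum>u<p+q. (-1)^(vpar p u) * supercomm (p+q) 1 1 (?X i) (?Y i) u u)"
      by (rule sum.swap)
    finally show ?thesis unfolding str_def .
  qed
  also have "\<dots> = 0"
  proof (intro sum.neutral ballI)
    fix i assume "i \<in> {..<n}"
    hence i: "i < n" by simp
    have "P (0,i) (1::nat,i) = 1" "P (1::nat,i) (0,i) = 1" unfolding P_def by simp_all
    thus "str (p+q) p (supercomm (p+q) 1 1 (?X i) (?Y i)) = 0"
      using str_odd homog_E[of "(0,i)" "(1,i)"] homog_T[of "(1,i)" "(0,i)" k] idx[OF i] by simp
  qed
  finally show ?thesis .
qed

end

lemma eig_exists:
  fixes C :: cmat
  assumes "0 < N"
  shows "\<exists>k v. (\<forall>u\<ge>N. v u = 0) \<and> (\<exists>u<N. v u \<noteq> 0) \<and> (\<forall>u<N. (\<Sum>b<N. C u b * v b) = k * v u)"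
proof -
  define A where "A = mat N N (\<lambda>(i,j). C i j)"
  have A: "A \<in> carrier_mat N N" unfolding A_def by simp
  from spectrum_non_empty[OF A assms] obtain k where "eigenvalue A k" unfolding spectrum_def by auto
  then obtain w where w: "w \<in> carrier_vec N" "w \<noteq> 0\<^sub>v N" "A *\<^sub>v w = k \<cdot>\<^sub>v w"
    unfolding eigenvalue_def eigenvector_def using A by auto
  define v where "v = (\<lambda>u. if u < N then w $ u else 0)"
  have "\<exists>u<N. v u \<noteq> 0"
  proof (rule ccontr)
    assume "\<not> ?thesis"
    hence "w = 0\<^sub>v N" using w(1) unfolding v_def by (intro eq_vecI) auto
    thus False using w(2) by simp
  qed
  moreover have "\<forall>u<N. (\<Sum>b<N. C u b * v b) = k * v u"
  proof (intro allI impI)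
    fix u assume u: "u < N"
    have "(A *\<^sub>v w) $ u = (k \<cdot>\<^sub>v w) $ u" using w(3) by simp
    hence "(\<Sum>b<N. C u b * w $ b) = k * w $ u"
      using u w(1) unfolding A_def by (simp add: mult_mat_vec_def scalar_prod_def atLeast0LessThan)
    thus "(\<Sum>b<N. C u b * v b) = k * v u" using u unfolding v_def by simp
  qed
  moreover have "\<forall>u\<ge>N. v u = 0" unfolding v_def by simp
  ultimately show ?thesis by blast
qed


lemma sum_vpar: "(\<Sum>u<p+q. (-1::complex)^(vpar p u)) = of_nat p - of_nat q"
proof (induction q)
  case 0
  have "(\<Sum>u<p. (-1::complex)^(vpar p u)) = (\<Sum>u<p. 1)"
    by (intro sum.cong refl) (simp add: vpar_def)
  thus ?case by simp
next
  case (Suc q)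
  have "(\<Sum>u<p + Suc q. (-1::complex)^(vpar p u)) = (\<Sum>u<p+q. (-1::complex)^(vpar p u)) + (-1)^(vpar p (p+q))"
    by simp
  also have "(-1::complex)^(vpar p (p+q)) = -1" by (simp add: vpar_def)
  finally show ?case using Suc by simp
qed

theorem mainTheorem7:
  fixes n p q l :: nat and \<rho> :: "nat \<Rightarrow> nat \<Rightarrow> nat \<Rightarrow> nat \<Rightarrow> cmat"
  assumes "is_rep n p q \<rho>"
    and "irreducible_rep n p q \<rho>"
    and "p \<noteq> q"
    and "1 \<le> l"
  shows "\<forall>x<p+q. \<forall>y<p+q. casimir_image n p q \<rho> l x y = 0"
proof -
  interpret crep n p q \<rho> by (rule crep.intro) (rule assms(1))
  obtain k where l: "l = Suc k" using assms(4) by (cases l) auto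
  let ?N = "p+q"
  let ?C = "Cas k"
  have N: "0 < ?N" using assms(2) unfolding irreducible_rep_def by simp
  obtain lam v0 where v0: "\<forall>u\<ge>?N. v0 u = 0" "\<exists>u<?N. v0 u \<noteq> 0" "\<forall>u<?N. (\<Sum>b<?N. ?C u b * v0 b) = lam * v0 u"
    using eig_exists[OF N, of ?C] by blast
  define W where "W = {w. (\<forall>u\<ge>?N. w u = 0) \<and> (\<forall>u<?N. (\<Sum>b<?N. ?C u b * w b) = lam * w u)}"
  have even: "\<And>u b. u < ?N \<Longrightarrow> b < ?N \<Longrightarrow> vpar p u \<noteq> vpar p b \<Longrightarrow> ?C u b = 0"
  proof -
    fix u b assume ub: "u < ?N" "b < ?N" "vpar p u \<noteq> vpar p b"
    have "(vpar p u + vpar p b) mod 2 \<noteq> 0" using ub(3) unfolding vpar_def by (auto split: if_splits)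
    show "?C u b = 0"
    proof (rule ccontr)
      assume "?C u b \<noteq> 0"
      hence "(vpar p u + vpar p b) mod 2 = 0"
        using Cas_even[of k, unfolded homog_def, rule_format, OF ub(1) ub(2)] by simp
      thus False using \<open>(vpar p u + vpar p b) mod 2 \<noteq> 0\<close> by simp
    qed
  qed
  have sub: "is_subspace ?N W"
    unfolding is_subspace_def
  proof (intro conjI ballI allI)
    show "W \<subseteq> vecs ?N" unfolding W_def vecs_def by auto
    show "(\<lambda>_. 0) \<in> W" unfolding W_def by simp
  next
    fix v w assume "v \<in> W" "w \<in> W"
    thus "(\<lambda>a. v a + w a) \<in> W" unfolding W_def by (simp add: distrib_left sum.distrib)
  next
    fix c v assume "v \<in> W"
    hence v: "\<forall>u\<ge>?N. v u = 0" "\<forall>u<?N. (\<Sum>b<?N. ?C u b * v b) = lam * v u" unfolding W_def by auto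
    have "\<forall>u<?N. (\<Sum>b<?N. ?C u b * (c * v b)) = lam * (c * v u)"
    proof (intro allI impI)
      fix u assume "u < ?N"
      have "(\<Sum>b<?N. ?C u b * (c * v b)) = c * (\<Sum>b<?N. ?C u b * v b)"
        by (simp add: sum_distrib_left mult_ac)
      thus "(\<Sum>b<?N. ?C u b * (c * v b)) = lam * (c * v u)" using v(2) \<open>u < ?N\<close> by simp
    qed
    thus "(\<lambda>a. c * v a) \<in> W" using v(1) unfolding W_def by simp
  qed
  have gr: "graded p W"
    unfolding graded_def
  proof
    fix w assume "w \<in> W"
    hence w: "\<forall>u\<ge>?N. w u = 0" "\<forall>u<?N. (\<Sum>b<?N. ?C u b * w b) = lam * w u" unfolding W_def by auto
    let ?w = "\<lambda>a. if a < p then w a else 0"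
    have "\<forall>u<?N. (\<Sum>b<?N. ?C u b * ?w b) = lam * ?w u"
    proof (intro allI impI)
      fix u assume u: "u < ?N"
      show "(\<Sum>b<?N. ?C u b * ?w b) = lam * ?w u"
      proof (cases "u < p")
        case True
        have "(\<Sum>b<?N. ?C u b * ?w b) = (\<Sum>b<?N. ?C u b * w b)"
        proof (intro sum.cong refl)
          fix b assume "b \<in> {..<?N}"
          hence b: "b < ?N" by simp
          show "?C u b * ?w b = ?C u b * w b"
          proof (cases "b < p")
            case False
            hence "vpar p u \<noteq> vpar p b" using True unfolding vpar_def by simp
            thus ?thesis using even[OF u b] by simp
          qed simp
        qed
        thus ?thesis using w(2) u True by simp
      next
        case False
        have "(\<Sum>b<?N. ?C u b * ?w b) = 0"
        proof (intro sum.neutral ballI)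
          fix b assume "b \<in> {..<?N}"
          hence b: "b < ?N" by simp
          show "?C u b * ?w b = 0"
          proof (cases "b < p")
            case True
            hence "vpar p u \<noteq> vpar p b" using False unfolding vpar_def by simp
            thus ?thesis using even[OF u b] by simp
          qed simp
        qed
        thus ?thesis using False by simp
      qed
    qed
    moreover have "\<forall>u\<ge>?N. ?w u = 0" using w(1) by simp
    ultimately show "?w \<in> W" unfolding W_def by simp
  qed
  have inv: "invariant n p q \<rho> W"
    unfolding invariant_def
  proof (intro allI impI ballI)
    fix \<sigma> \<tau> i j :: nat and w :: cvec assume st: "\<sigma> < 2" "\<tau> < 2" "i < n" "j < n" and "w \<in> W"
    hence w: "\<forall>u\<ge>?N. w u = 0" "\<forall>u<?N. (\<Sum>b<?N. ?C u b * w b) = lam * w u" unfolding W_def by auto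
    let ?A = "\<rho> \<sigma> \<tau> i j"
    let ?X = "E (\<sigma>,i) (\<tau>,j)"
    have idx: "(\<sigma>,i) \<in> Idx" "(\<tau>,j) \<in> Idx" using st unfolding Idx_def by auto
    have XA: "\<And>u b. u < ?N \<Longrightarrow> b < ?N \<Longrightarrow> ?X u b = ?A u b" unfolding E_def trunc_def by simp
    have "\<forall>u<?N. (\<Sum>b<?N. ?C u b * mvec ?N ?A w b) = lam * mvec ?N ?A w u"
    proof (intro allI impI)
      fix u assume u: "u < ?N"
      have "(\<Sum>b<?N. ?C u b * mvec ?N ?A w b) = (\<Sum>b<?N. \<Sum>c<?N. ?C u b * ?X b c * w c)"
        by (intro sum.cong refl) (simp add: mvec_def XA sum_distrib_left mult_ac)
      also have "\<dots> = (\<Sum>c<?N. \<Sum>b<?N. ?C u b * ?X b c * w c)" by (rule sum.swap)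
      also have "\<dots> = (\<Sum>c<?N. mmul ?N ?C ?X u c * w c)"
        by (simp add: mmul_def sum_distrib_right)
      also have "\<dots> = (\<Sum>c<?N. mmul ?N ?X ?C u c * w c)"
        using Cas_comm[OF idx] by simp
      also have "\<dots> = (\<Sum>c<?N. \<Sum>b<?N. ?X u b * ?C b c * w c)"
        by (simp add: mmul_def sum_distrib_right)
      also have "\<dots> = (\<Sum>b<?N. \<Sum>c<?N. ?X u b * ?C b c * w c)" by (rule sum.swap)
      also have "\<dots> = (\<Sum>b<?N. ?X u b * (\<Sum>c<?N. ?C b c * w c))"
        by (simp add: sum_distrib_left mult_ac)
      also have "\<dots> = (\<Sum>b<?N. ?A u b * (lam * w b))"
        by (intro sum.cong refl) (simp add: w(2) XA u)
      also have "\<dots> = lam * mvec ?N ?A w u"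
        using u by (simp add: mvec_def sum_distrib_left mult_ac)
      finally show "(\<Sum>b<?N. ?C u b * mvec ?N ?A w b) = lam * mvec ?N ?A w u" .
    qed
    moreover have "\<forall>u\<ge>?N. mvec ?N ?A w u = 0" by (simp add: mvec_def)
    ultimately show "mvec ?N ?A w \<in> W" unfolding W_def by simp
  qed
  have v0W: "v0 \<in> W" using v0 unfolding W_def by simp
  have "v0 \<noteq> (\<lambda>_. 0)" using v0(2) by auto
  hence "W \<noteq> {\<lambda>_. 0}" using v0W by auto
  hence W: "W = vecs ?N" using assms(2) sub gr inv unfolding irreducible_rep_def by blast
  have diag: "\<And>u y. u < ?N \<Longrightarrow> y < ?N \<Longrightarrow> ?C u y = lam * (if u = y then 1 else 0)"
  proof -
    fix u y assume u: "u < ?N" and y: "y < ?N"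
    let ?e = "\<lambda>b. if b = y then (1::complex) else 0"
    have "?e \<in> vecs ?N" using y unfolding vecs_def by auto
    hence "?e \<in> W" using W by simp
    hence "(\<Sum>b<?N. ?C u b * ?e b) = lam * ?e u" using u unfolding W_def by blast
    moreover have "(\<Sum>b<?N. ?C u b * ?e b) = ?C u y"
    proof -
      have "(\<Sum>b<?N. ?C u b * ?e b) = (\<Sum>b<?N. if b = y then ?C u b else 0)"
        by (intro sum.cong refl) simp
      thus ?thesis using y by simp
    qed
    ultimately show "?C u y = lam * (if u = y then 1 else 0)" by simp
  qed
  have "str ?N p ?C = (\<Sum>u<?N. (-1)^(vpar p u) * lam)"
    unfolding str_def by (intro sum.cong refl) (simp add: diag)
  also have "\<dots> = lam * (\<Sum>u<?N. (-1::complex)^(vpar p u))"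
    by (simp add: sum_distrib_left mult.commute)
  also have "\<dots> = lam * (of_nat p - of_nat q)"
    by (simp only: sum_vpar)
  finally have "lam * (of_nat p - of_nat q) = 0" using Cas_str[of k] by simp
  moreover have "(of_nat p :: complex) - of_nat q \<noteq> 0" using assms(3) by simp
  ultimately have lam0: "lam = 0" by simp
  show ?thesis
  proof (intro allI impI)
    fix x y assume x: "x < ?N" and y: "y < ?N"
    have "casimir_image n p q \<rho> l x y = ?C x y"
      unfolding l casimir_bridge[OF x y] Cas_def by simp
    also have "\<dots> = 0" using diag[OF x y] lam0 by simp
    finally show "casimir_image n p q \<rho> l x y = 0" .
  qed
qed

end
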